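(* For $|\phi\rangle$ drawn uniformly at random from unit vectors in $\mathcal{H}_R$, with $\rho_S=\mathrm{Tr}_E(|\phi\rangle\langle\phi|)$ and $\rho_E=\mathrm{Tr}_S(|\phi\rangle\langle\phi|)$, \[ \langle\mathrm{Tr}\,\rho_S^2\rangle\le\mathrm{Tr}\,\langle\rho_S\rangle^2+\mathrm{Tr}\,\langle\rho_E\rangle^2=\mathrm{Tr}\,\Omega_S^2+\mathrm{Tr}\,\Omega_E^2 , \] where $\Omega_S=\mathrm{Tr}_E\,\mathcal{E}_R$, $\Omega_E=\mathrm{Tr}_S\,\mathcal{E}_R$.
   Context: Constraint subspace $\mathcal{H}_R\subseteq\mathcal{H}_S\otimes\mathcal{H}_E$ of dimension $d_R$; $\mathcal{E}_R=\mathbb{1}_R/d_R$ with $\mathbb{1}_R$ the identity on $\mathcal{H}_R$; $\langle\cdot\rangle$ is the average over the uniform distribution on unit vectors of $\mathcal{H}_R$ (so $\langle\rho_S\rangle=\Omega_S$, $\langle\rho_E\rangle=\Omega_E$). *)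

theory Defs
  imports "HOL-Analysis.Analysis"
begin

text \<open>Uniform (normalised surface) probability distribution on the unit sphere of a
  finite-dimensional real Euclidean space: the push-forward of the uniform distribution
  on the unit ball under radial projection.  For complex vectors \<open>complex^'r\<close>
  (viewed as \<open>\<real>^(2 CARD('r))\<close>) this is the uniform distribution on unit vectors.\<close>
definition uniform_sphere :: "('a::euclidean_space) measure" where
  "uniform_sphere = distr (uniform_measure lborel (ball 0 1)) borel (\<lambda>x. x /\<^sub>R norm x)"

definition adj :: "complex^'n^'m \<Rightarrow> complex^'m^'n" where
  "adj A = (\<chi> i j. cnj (A $ j $ i))"

definition ketbra :: "complex^'n \<Rightarrow> complex^'n^'n" where
  "ketbra \<phi> = (\<chi> a b. \<phi> $ a * cnj (\<phi> $ b))"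

definition ptrace_E :: "complex^('s::finite \<times> 'e::finite)^('s \<times> 'e) \<Rightarrow> complex^'s^'s" where
  "ptrace_E A = (\<chi> i i'. \<Sum>e\<in>UNIV. A $ (i, e) $ (i', e))"

definition ptrace_S :: "complex^('s::finite \<times> 'e::finite)^('s \<times> 'e) \<Rightarrow> complex^'e^'e" where
  "ptrace_S A = (\<chi> j j'. \<Sum>s\<in>UNIV. A $ (s, j) $ (s, j'))"

definition avg_mat :: "'x measure \<Rightarrow> ('x \<Rightarrow> complex^'n^'m) \<Rightarrow> complex^'n^'m" where
  "avg_mat M f = (\<chi> i j. integral\<^sup>L M (\<lambda>x. f x $ i $ j))"

end

theory Submission
  imports Defs
begin

typedef 'a wo = "UNIV :: 'a set" by auto

instance wo :: (finite) finite
proof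
  have "(UNIV :: 'a wo set) = Abs_wo ` UNIV"
    by (metis Rep_wo_inverse surj_def)
  moreover have "finite (range (Abs_wo :: 'a \<Rightarrow> 'a wo))" by simp
  ultimately show "finite (UNIV :: 'a wo set)" by simp
qed

instantiation wo :: (finite) linorder
begin
definition less_eq_wo :: "'a wo \<Rightarrow> 'a wo \<Rightarrow> bool" where
  "less_eq_wo x y \<longleftrightarrow> to_nat (Rep_wo x) \<le> to_nat (Rep_wo y)"
definition less_wo :: "'a wo \<Rightarrow> 'a wo \<Rightarrow> bool" where
  "less_wo x y \<longleftrightarrow> to_nat (Rep_wo x) < to_nat (Rep_wo y)"
instance
proof
  fix x y :: "'a wo"
  show "x \<le> y \<Longrightarrow> y \<le> x \<Longrightarrow> x = y"
    unfolding less_eq_wo_def by (metis Rep_wo_inject le_antisym to_nat_split)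
qed (auto simp: less_eq_wo_def less_wo_def)
end

instance wo :: (finite) wellorder
proof
  fix P :: "'a wo \<Rightarrow> bool" and a
  assume H: "\<And>x. (\<And>y. y < x \<Longrightarrow> P y) \<Longrightarrow> P x"
  show "P a"
    by (induction a rule: measure_induct_rule[where f="\<lambda>x. to_nat (Rep_wo x)"])
       (rule H, simp add: less_wo_def)
qed


lemma linear_borel_measurable:
  fixes f :: "'a::euclidean_space \<Rightarrow> 'b::real_normed_vector"
  assumes "linear f" shows "f \<in> borel_measurable borel"
  by (intro borel_measurable_continuous_onI linear_continuous_on) (use assms linear_conv_bounded_linear in auto)

lemma lborel_orth_vec:
  fixes T :: "real^('n::{finite,wellorder}) \<Rightarrow> real^('n::{finite,wellorder})"
  assumes T: "orthogonal_transformation T"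
  shows "distr lborel borel T = lborel"
proof (rule lborel_eqI[symmetric])
  have lin: "linear T" using T orthogonal_transformation_linear by blast
  have meas: "T \<in> borel_measurable borel" by (rule linear_borel_measurable[OF lin])
  define Ti where "Ti = inv T"
  have Ti: "orthogonal_transformation Ti" unfolding Ti_def using T orthogonal_transformation_inv by blast
  have bij: "bij T" using T orthogonal_transformation_bij by blast
  fix l u :: "real^('n::{finite,wellorder})" assume le: "\<And>b. b \<in> Basis \<Longrightarrow> l \<bullet> b \<le> u \<bullet> b"
  have pre: "T -` box l u = Ti ` box l u"
    unfolding Ti_def using bij by (simp add: bij_vimage_eq_inv_image)
  have bor: "T -` box l u \<in> sets borel"
    using measurable_sets[OF meas, of "box l u"] by simp
  have lm: "Ti ` box l u \<in> lmeasurable"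
    using measurable_orthogonal_image[OF Ti] by simp
  have "emeasure (distr lborel borel T) (box l u) = emeasure lborel (T -` box l u)"
    using meas by (simp add: emeasure_distr)
  also have "\<dots> = emeasure lebesgue (T -` box l u)"
    using bor by (simp add: emeasure_completion main_part_sets)
  also have "\<dots> = ennreal (measure lebesgue (Ti ` box l u))"
    using lm pre by (simp add: emeasure_eq_measure2)
  also have "\<dots> = ennreal (measure lebesgue (box l u))"
    using measure_orthogonal_image[OF Ti] by simp
  also have "\<dots> = emeasure lebesgue (box l u)"
    by (simp add: emeasure_eq_measure2)
  also have "\<dots> = emeasure lborel (box l u)"
    by (simp add: emeasure_completion main_part_sets)
  also have "\<dots> = (\<Prod>b\<in>Basis. (u - l) \<bullet> b)"
    using le by simp
  finally show "emeasure (distr lborel borel T) (box l u) = (\<Prod>b\<in>Basis. (u - l) \<bullet> b)" .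
qed simp

lemma lborel_basis_iso:
  fixes L :: "'a::euclidean_space \<Rightarrow> 'b::euclidean_space"
  assumes lin: "linear L" and inn: "\<And>x y. L x \<bullet> L y = x \<bullet> y" and bas: "L ` Basis = Basis"
  shows "distr lborel borel L = lborel"
proof (rule lborel_eqI[symmetric])
  have meas: "L \<in> borel_measurable borel" by (rule linear_borel_measurable[OF lin])
  have inj: "inj_on L Basis"
  proof (rule inj_onI)
    fix b b' :: 'a assume b: "b \<in> Basis" "b' \<in> Basis" "L b = L b'"
    have "b \<bullet> b' = 1" using inn[of b b'] inn[of b' b'] b by (simp add: inner_Basis)
    then show "b = b'" using b by (simp add: inner_Basis split: if_splits)
  qed
  fix l u :: 'b assume le: "\<And>b. b \<in> Basis \<Longrightarrow> l \<bullet> b \<le> u \<bullet> b"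
  define P where "P y = (\<Sum>b\<in>Basis. (y \<bullet> L b) *\<^sub>R b)" for y :: 'b
  have Pb: "P y \<bullet> b = y \<bullet> L b" if "b \<in> Basis" for y b
    unfolding P_def using that by (simp add: inner_sum_left_Basis)
  have pre: "L -` box l u = box (P l) (P u)"
  proof -
    have "x \<in> L -` box l u \<longleftrightarrow> x \<in> box (P l) (P u)" for x
    proof -
      have "x \<in> L -` box l u \<longleftrightarrow> (\<forall>c\<in>L ` Basis. l \<bullet> c < L x \<bullet> c \<and> L x \<bullet> c < u \<bullet> c)"
        using bas by (simp add: mem_box)
      also have "\<dots> \<longleftrightarrow> (\<forall>b\<in>Basis. l \<bullet> L b < x \<bullet> b \<and> x \<bullet> b < u \<bullet> L b)"
        by (simp add: inn)
      also have "\<dots> \<longleftrightarrow> x \<in> box (P l) (P u)"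
        by (simp add: mem_box Pb)
      finally show ?thesis .
    qed
    then show ?thesis by blast
  qed
  have "emeasure (distr lborel borel L) (box l u) = emeasure lborel (box (P l) (P u))"
    using meas pre by (simp add: emeasure_distr)
  also have "\<dots> = (\<Prod>b\<in>Basis. (P u - P l) \<bullet> b)"
    using le bas by (intro emeasure_lborel_box) (auto simp: Pb)
  also have "\<dots> = (\<Prod>b\<in>Basis. (u - l) \<bullet> L b)"
    by (intro arg_cong[where f=ennreal] prod.cong) (auto simp: inner_diff_left Pb)
  also have "\<dots> = (\<Prod>c\<in>L ` Basis. (u - l) \<bullet> c)"
    using inj by (simp add: prod.reindex)
  finally show "emeasure (distr lborel borel L) (box l u) = (\<Prod>b\<in>Basis. (u - l) \<bullet> b)"
    using bas by simp
qed simp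



lemma Rep_Abs_wo [simp]: "Rep_wo (Abs_wo x) = x"
  by (simp add: Abs_wo_inverse)

definition Lc :: "complex^'r \<Rightarrow> real^(('r \<times> bool) wo)" where
  "Lc z = (\<chi> w. (case Rep_wo w of (a, t) \<Rightarrow> if t then Re (z $ a) else Im (z $ a)))"

definition Li :: "real^(('r \<times> bool) wo) \<Rightarrow> complex^'r" where
  "Li y = (\<chi> a. Complex (y $ Abs_wo (a, True)) (y $ Abs_wo (a, False)))"

lemma Li_Lc [simp]: "Li (Lc z) = z"
  by (simp add: Li_def Lc_def vec_eq_iff Abs_wo_inverse complex_eq_iff)

lemma Lc_Li [simp]: "Lc (Li y) = y"
proof -
  have "Lc (Li y) $ w = y $ w" for w
  proof -
    obtain a t where w: "Rep_wo w = (a, t)" by fastforce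
    have w': "w = Abs_wo (a, t)" using w by (metis Rep_wo_inverse)
    show ?thesis by (cases t) (simp_all add: Lc_def Li_def w w')
  qed
  then show ?thesis by (simp add: vec_eq_iff)
qed

lemma linear_Lc: "linear Lc"
  by (rule linearI) (auto simp: Lc_def vec_eq_iff split: prod.splits)

lemma linear_Li: "linear Li"
  by (rule linearI) (auto simp: Li_def vec_eq_iff complex_eq_iff)

lemma sum_wo: "(\<Sum>w\<in>(UNIV :: ('a::finite \<times> bool) wo set). f w) = (\<Sum>a\<in>UNIV. f (Abs_wo (a, True)) + f (Abs_wo (a, False)))"
proof -
  have "(\<Sum>w\<in>(UNIV :: ('a \<times> bool) wo set). f w) = (\<Sum>p\<in>UNIV. f (Abs_wo p))"
    by (rule sum.reindex_bij_witness[where i=Abs_wo and j=Rep_wo]) (auto simp: Rep_wo_inverse)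
  also have "\<dots> = (\<Sum>a\<in>UNIV. \<Sum>t\<in>UNIV. f (Abs_wo (a, t)))"
    by (simp only: sum.cartesian_product UNIV_Times_UNIV) (simp add: case_prod_unfold)
  also have "\<dots> = (\<Sum>a\<in>UNIV. f (Abs_wo (a, True)) + f (Abs_wo (a, False)))"
    by (simp add: UNIV_bool add.commute)
  finally show ?thesis .
qed

lemma inner_Lc: "Lc x \<bullet> Lc y = x \<bullet> y"
  by (simp add: inner_vec_def sum_wo Lc_def Abs_wo_inverse inner_complex_def)

lemma inner_Li: "Li x \<bullet> Li y = x \<bullet> y"
  by (metis inner_Lc Lc_Li)

lemma wo_cases: obtains a t where "w = Abs_wo (a, t)"
  by (metis Rep_wo_inverse surj_pair)

lemma Lc_axis1: "Lc (axis a 1) = axis (Abs_wo (a, True)) 1"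
proof -
  have "Lc (axis a 1) $ w = axis (Abs_wo (a, True)) 1 $ w" for w
    by (cases w rule: wo_cases) (auto simp: Lc_def axis_def Abs_wo_inject)
  then show ?thesis by (simp add: vec_eq_iff)
qed

lemma Lc_axisi: "Lc (axis a \<i>) = axis (Abs_wo (a, False)) 1"
proof -
  have "Lc (axis a \<i>) $ w = axis (Abs_wo (a, False)) 1 $ w" for w
    by (cases w rule: wo_cases) (auto simp: Lc_def axis_def Abs_wo_inject)
  then show ?thesis by (simp add: vec_eq_iff)
qed

lemma Lc_Basis: "Lc ` Basis = Basis"
proof
  show "Lc ` Basis \<subseteq> Basis"
    by (auto simp: Basis_vec_def Basis_complex_def Lc_axis1 Lc_axisi)
  show "Basis \<subseteq> Lc ` Basis"
  proof
    fix v :: "real^(('r::finite \<times> bool) wo)" assume "v \<in> Basis"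
    then obtain w where v: "v = axis w 1" by (auto simp: Basis_vec_def)
    obtain a t where w: "w = Abs_wo (a, t)" by (metis Rep_wo_inverse surj_pair)
    show "v \<in> Lc ` Basis"
    proof (cases t)
      case True
      then have "v = Lc (axis a 1)" by (simp add: v w Lc_axis1)
      then show ?thesis by (auto simp: Basis_vec_def Basis_complex_def)
    next
      case False
      then have "v = Lc (axis a \<i>)" by (simp add: v w Lc_axisi)
      then show ?thesis by (auto simp: Basis_vec_def Basis_complex_def)
    qed
  qed
qed

lemma Li_Basis: "Li ` Basis = Basis"
proof -
  have "Li ` Basis = Li ` (Lc ` Basis)" by (simp only: Lc_Basis)
  also have "\<dots> = Basis" by (simp add: image_image)
  finally show ?thesis .
qed

lemma lborel_orth_complex:
  fixes U :: "complex^'r \<Rightarrow> complex^'r"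
  assumes U: "orthogonal_transformation U"
  shows "distr lborel borel U = lborel"
proof -
  define T where "T = Lc \<circ> U \<circ> Li"
  have linU: "linear U" using U orthogonal_transformation_linear by blast
  have "orthogonal_transformation T"
    unfolding orthogonal_transformation
  proof
    show "linear T" unfolding T_def
      by (intro linear_compose linear_Li linear_Lc linU)
    show "\<forall>v. norm (T v) = norm v"
      using U by (simp add: T_def norm_eq_sqrt_inner inner_Lc inner_Li orthogonal_transformation)
  qed
  then have dT: "distr lborel borel T = lborel" by (rule lborel_orth_vec)
  have dLi: "distr lborel borel Li = lborel"
    by (rule lborel_basis_iso[OF linear_Li inner_Li Li_Basis])
  have mU: "U \<in> borel_measurable borel" by (rule linear_borel_measurable[OF linU])
  have mLi: "Li \<in> borel_measurable borel" by (rule linear_borel_measurable[OF linear_Li])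
  have mT: "T \<in> borel_measurable borel"
    unfolding T_def by (intro linear_borel_measurable linear_compose linear_Li linear_Lc linU)
  have eq: "U \<circ> Li = Li \<circ> T" by (simp add: T_def fun_eq_iff)
  have "distr lborel borel U = distr (distr lborel borel Li) borel U" by (simp add: dLi)
  also have "\<dots> = distr lborel borel (U \<circ> Li)"
    using mU mLi by (subst distr_distr) auto
  also have "\<dots> = distr lborel borel (Li \<circ> T)" by (simp add: eq)
  also have "\<dots> = distr (distr lborel borel T) borel Li"
    using mT mLi by (subst distr_distr) auto
  also have "\<dots> = lborel" by (simp add: dT dLi)
  finally show ?thesis .
qed




definition nrm :: "'a::euclidean_space \<Rightarrow> 'a" where "nrm x = x /\<^sub>R norm x"

lemma nrm_meas[measurable]: "nrm \<in> borel_measurable borel"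
  unfolding nrm_def by measurable

abbreviation UB :: "'a::euclidean_space measure" where
  "UB \<equiv> uniform_measure lborel (ball 0 1)"

lemma US_eq: "uniform_sphere = distr UB borel nrm"
  unfolding uniform_sphere_def nrm_def ..

lemma ball_pos: "emeasure lborel (ball (0::'a::euclidean_space) 1) \<noteq> 0"
proof -
  have "unit_ball_vol (real DIM('a)) > 0" by simp
  then have "unit_ball_vol (real DIM('a)) \<noteq> 0" by linarith
  then show ?thesis using emeasure_ball[of 1 "0::'a"] by simp
qed

lemma ball_fin: "emeasure lborel (ball (0::'a::euclidean_space) 1) \<noteq> \<infinity>"
  using emeasure_lborel_ball_finite[of "0::'a" 1] by simp

lemma sets_US[simp]: "sets (uniform_sphere :: 'a::euclidean_space measure) = sets borel"
  by (simp add: US_eq)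

lemma space_US[simp]: "space (uniform_sphere :: 'a::euclidean_space measure) = UNIV"
  by (simp add: US_eq)

lemma emeasure_US_UNIV: "emeasure (uniform_sphere :: 'a::euclidean_space measure) UNIV = 1"
proof -
  have "emeasure (uniform_sphere :: 'a measure) UNIV = emeasure (UB :: 'a measure) UNIV"
    by (simp add: US_eq emeasure_distr)
  also have "\<dots> = 1"
    using ball_pos[where 'a='a] ball_fin[where 'a='a]
    by (simp add: emeasure_uniform_measure divide_eq_1_ennreal)
  finally show ?thesis .
qed

lemma finite_US: "finite_measure (uniform_sphere :: 'a::euclidean_space measure)"
  by (rule finite_measureI) (simp add: emeasure_US_UNIV)

lemma measure_US_UNIV: "measure (uniform_sphere :: 'a::euclidean_space measure) UNIV = 1"
  using emeasure_US_UNIV[where 'a='a] by (simp add: measure_def)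

lemma AE_US_norm: "AE x in (uniform_sphere :: 'a::euclidean_space measure). norm x = 1"
proof -
  have "AE x in (UB :: 'a measure). norm (nrm x) = 1"
  proof -
    have "AE x in (lborel :: 'a measure). x \<in> ball 0 1 \<longrightarrow> norm (nrm x) = 1"
      using AE_lborel_singleton[of "0::'a"] by eventually_elim (simp add: nrm_def)
    then show ?thesis
      using ball_pos[where 'a='a] ball_fin[where 'a='a]
      by (subst AE_uniform_measure) (auto simp: less_top)
  qed
  then show ?thesis
    unfolding US_eq by (subst AE_distr_iff) auto
qed

lemma integrable_US_cont:
  fixes g :: "'a::euclidean_space \<Rightarrow> 'b::{banach,second_countable_topology}"
  assumes "continuous_on UNIV g"
  shows "integrable uniform_sphere g"
proof -
  have "compact (g ` sphere 0 1)"
    using assms by (intro compact_continuous_image) (auto intro: continuous_on_subset)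
  then obtain B where B: "\<And>y. y \<in> g ` sphere 0 1 \<Longrightarrow> norm y \<le> B"
    by (meson compact_imp_bounded bounded_iff)
  have "AE x in (uniform_sphere :: 'a measure). norm (g x) \<le> B"
    using AE_US_norm by eventually_elim (auto intro!: B)
  moreover have "g \<in> borel_measurable (uniform_sphere :: 'a measure)"
    using borel_measurable_continuous_onI[OF assms] by (simp add: measurable_cong_sets[OF sets_US refl])
  ultimately show ?thesis
    by (intro finite_measure.integrable_const_bound[OF finite_US])
qed

lemma UB_invariant:
  fixes U :: "complex^'r \<Rightarrow> complex^'r"
  assumes U: "orthogonal_transformation U"
  shows "distr UB borel U = UB"
proof (rule measure_eqI)
  show "sets (distr UB borel U) = sets UB" by simp
  have mU: "U \<in> borel_measurable borel"
    using U orthogonal_transformation_linear linear_borel_measurable by blast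
  fix A assume A: "A \<in> sets (distr UB borel U)"
  then have Ab: "A \<in> sets borel" by simp
  have pre: "U -` A \<inter> ball 0 1 = U -` (A \<inter> ball 0 1)"
    using U by (auto simp: orthogonal_transformation)
  have "emeasure (distr UB borel U) A = emeasure UB (U -` A)"
    using mU Ab by (simp add: emeasure_distr)
  also have "\<dots> = emeasure lborel (ball 0 1 \<inter> U -` A) / emeasure lborel (ball (0::complex^'r) 1)"
    using mU Ab by (subst emeasure_uniform_measure) (auto intro: measurable_sets_borel)
  also have "emeasure lborel (ball 0 1 \<inter> U -` A) = emeasure (distr lborel borel U) (A \<inter> ball 0 1)"
    using mU Ab pre by (subst emeasure_distr) (auto simp: Int_commute)
  also have "\<dots> = emeasure lborel (A \<inter> ball 0 1)"
    by (simp add: lborel_orth_complex[OF U])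
  also have "emeasure lborel (A \<inter> ball 0 1) / emeasure lborel (ball (0::complex^'r) 1) = emeasure UB A"
    using Ab by (subst emeasure_uniform_measure) (auto simp: Int_commute)
  finally show "emeasure (distr UB borel U) A = emeasure UB A" .
qed

lemma US_invariant:
  fixes U :: "complex^'r \<Rightarrow> complex^'r"
  assumes U: "orthogonal_transformation U"
  shows "distr uniform_sphere borel U = uniform_sphere"
proof -
  have mU: "U \<in> borel_measurable borel"
    using U orthogonal_transformation_linear linear_borel_measurable by blast
  have comm: "U \<circ> nrm = nrm \<circ> U"
    using U by (auto simp: fun_eq_iff nrm_def orthogonal_transformation orthogonal_transformation_scaleR)
  have "distr uniform_sphere borel U = distr UB borel (U \<circ> nrm)"
    unfolding US_eq using mU by (subst distr_distr) auto
  also have "\<dots> = distr UB borel (nrm \<circ> U)" by (simp add: comm)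
  also have "\<dots> = distr (distr UB borel U) borel nrm"
    using mU by (subst distr_distr) auto
  also have "\<dots> = uniform_sphere" by (simp add: UB_invariant[OF U] US_eq)
  finally show ?thesis .
qed

lemma integral_US_invariant:
  fixes U :: "complex^'r \<Rightarrow> complex^'r" and g :: "complex^'r \<Rightarrow> 'b::{banach,second_countable_topology}"
  assumes U: "orthogonal_transformation U" and g: "g \<in> borel_measurable borel"
  shows "(\<integral>x. g (U x) \<partial>uniform_sphere) = (\<integral>x. g x \<partial>uniform_sphere)"
proof -
  have mU: "U \<in> borel_measurable borel"
    using U orthogonal_transformation_linear linear_borel_measurable by blast
  have "(\<integral>x. g x \<partial>uniform_sphere) = (\<integral>x. g x \<partial>(distr uniform_sphere borel U))"
    by (simp add: US_invariant[OF U])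
  also have "\<dots> = (\<integral>x. g (U x) \<partial>uniform_sphere)"
    using mU g by (subst integral_distr) (auto simp: measurable_cong_sets[OF sets_US refl])
  finally show ?thesis by simp
qed




lemma cont_vec_nth[continuous_intros]: "continuous_on S (\<lambda>x::('b::real_normed_vector)^'n. x $ a)"
  by (intro linear_continuous_on bounded_linear_vec_nth)

definition mo :: "'r \<Rightarrow> 'r \<Rightarrow> 'r \<Rightarrow> 'r \<Rightarrow> complex^'r \<Rightarrow> complex" where
  "mo a b c d x = x $ a * cnj (x $ b) * x $ c * cnj (x $ d)"

definition m4 :: "'r::finite \<Rightarrow> 'r \<Rightarrow> 'r \<Rightarrow> 'r \<Rightarrow> complex" where
  "m4 a b c d = (\<integral>x. mo a b c d x \<partial>(uniform_sphere :: (complex^'r) measure))"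

definition m2 :: "'r::finite \<Rightarrow> 'r \<Rightarrow> complex" where
  "m2 a b = (\<integral>x. x $ a * cnj (x $ b) \<partial>(uniform_sphere :: (complex^'r) measure))"

lemma cont_mo: "continuous_on UNIV (mo a b c d)"
  unfolding mo_def by (intro continuous_intros)

lemma integrable_mo[simp]: "integrable (uniform_sphere :: (complex^'r::finite) measure) (mo a b c d)"
  by (rule integrable_US_cont[OF cont_mo])

lemma integrable_mo'[simp]: "integrable (uniform_sphere :: (complex^'r::finite) measure) (\<lambda>x. mo a b c d x)"
  by (rule integrable_US_cont[OF cont_mo])

lemma integrable_m2[simp]: "integrable (uniform_sphere :: (complex^'r::finite) measure) (\<lambda>x. x $ a * cnj (x $ b))"
  by (rule integrable_US_cont) (intro continuous_intros)

lemma meas_mo[measurable]: "mo a b c d \<in> borel_measurable borel"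
  by (rule borel_measurable_continuous_onI[OF cont_mo])

lemma meas_m2: "(\<lambda>x::complex^'r. x $ a * cnj (x $ b)) \<in> borel_measurable borel"
  by (rule borel_measurable_continuous_onI) (intro continuous_intros)

definition Ph :: "'r \<Rightarrow> complex^'r \<Rightarrow> complex^'r" where
  "Ph k x = (\<chi> j. (if j = k then \<i> else 1) * x $ j)"

lemma orth_Ph: "orthogonal_transformation (Ph k)"
  unfolding orthogonal_transformation
proof
  show "linear (Ph k)"
    by (rule linearI) (auto simp: Ph_def vec_eq_iff scaleR_conv_of_real algebra_simps)
  show "\<forall>v. norm (Ph k v) = norm v"
    by (simp add: Ph_def norm_vec_def L2_set_def norm_mult)
qed

lemma m4_phase:
  "m4 a b c d = (if a = k then \<i> else 1) * cnj (if b = k then \<i> else 1) * (if c = k then \<i> else 1) * cnj (if d = k then \<i> else 1) * m4 a b c d"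
proof -
  have "m4 a b c d = (\<integral>x. mo a b c d (Ph k x) \<partial>uniform_sphere)"
    unfolding m4_def by (rule integral_US_invariant[OF orth_Ph meas_mo, symmetric])
  also have "\<dots> = (\<integral>x. ((if a = k then \<i> else 1) * cnj (if b = k then \<i> else 1) * (if c = k then \<i> else 1) * cnj (if d = k then \<i> else 1)) * mo a b c d x \<partial>uniform_sphere)"
    by (intro Bochner_Integration.integral_cong refl) (simp add: mo_def Ph_def)
  also have "\<dots> = (if a = k then \<i> else 1) * cnj (if b = k then \<i> else 1) * (if c = k then \<i> else 1) * cnj (if d = k then \<i> else 1) * m4 a b c d"
    unfolding m4_def by (rule integral_mult_right_zero)
  finally show ?thesis .
qed

lemma m2_phase:
  "m2 a b = (if a = k then \<i> else 1) * cnj (if b = k then \<i> else 1) * m2 a b"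
proof -
  have "m2 a b = (\<integral>x. (Ph k x) $ a * cnj ((Ph k x) $ b) \<partial>uniform_sphere)"
    unfolding m2_def by (rule integral_US_invariant[OF orth_Ph meas_m2, symmetric])
  also have "\<dots> = (\<integral>x. ((if a = k then \<i> else 1) * cnj (if b = k then \<i> else 1)) * (x $ a * cnj (x $ b)) \<partial>uniform_sphere)"
    by (intro Bochner_Integration.integral_cong refl) (simp add: Ph_def)
  also have "\<dots> = (if a = k then \<i> else 1) * cnj (if b = k then \<i> else 1) * m2 a b"
    unfolding m2_def by (rule integral_mult_right_zero)
  finally show ?thesis .
qed

lemma m2_zero: "a \<noteq> b \<Longrightarrow> m2 a b = 0"
  using m2_phase[of a b a] by simp

lemma m4_zero:
  assumes "\<not> ((a = b \<and> c = d) \<or> (a = d \<and> c = b))"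
  shows "m4 a b c d = 0"
proof -
  have A: "m4 a b c d = 0 \<or> ((if a = a then \<i> else 1) * cnj (if b = a then \<i> else 1) * (if c = a then \<i> else 1) * cnj (if d = a then \<i> else 1)) = 1"
    using m4_phase[of a b c d a] by (metis mult_cancel_right1)
  have C: "m4 a b c d = 0 \<or> ((if a = c then \<i> else 1) * cnj (if b = c then \<i> else 1) * (if c = c then \<i> else 1) * cnj (if d = c then \<i> else 1)) = 1"
    using m4_phase[of a b c d c] by (metis mult_cancel_right1)
  show ?thesis
    using A C assms
    by (cases "a = b"; cases "a = c"; cases "a = d"; cases "b = c"; cases "b = d"; cases "c = d") auto
qed




abbreviation s2 :: complex where "s2 \<equiv> complex_of_real (sqrt 2)"

definition Mx :: "'r \<Rightarrow> 'r \<Rightarrow> complex^'r \<Rightarrow> complex^'r" where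
  "Mx a c x = (\<chi> j. if j = a then (x $ a + x $ c) / s2 else if j = c then (x $ a - x $ c) / s2 else x $ j)"

lemma sum_two:
  fixes f :: "'r::finite \<Rightarrow> 'b::comm_monoid_add"
  assumes "a \<noteq> c"
  shows "sum f UNIV = f a + f c + sum f (UNIV - {a, c})"
proof -
  have "sum f UNIV = f a + sum f (UNIV - {a})" by (simp add: sum.remove)
  also have "sum f (UNIV - {a}) = f c + sum f (UNIV - {a} - {c})"
    using assms by (intro sum.remove) auto
  also have "UNIV - {a} - {c} = UNIV - {a, c}" by auto
  finally show ?thesis by (simp add: add.assoc)
qed

lemma norm_s2_sq: "(norm (z / s2))\<^sup>2 = (norm z)\<^sup>2 / 2"
  by (simp add: norm_divide power_divide)

lemma paral: "(norm (p + q))\<^sup>2 + (norm (p - q))\<^sup>2 = 2 * ((norm p)\<^sup>2 + (norm (q::complex))\<^sup>2)"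
  unfolding cmod_power2 by (simp add: power2_sum power2_diff algebra_simps)

lemma orth_Mx:
  assumes ac: "a \<noteq> c"
  shows "orthogonal_transformation (Mx a c)"
  unfolding orthogonal_transformation
proof
  show "linear (Mx a c)"
  proof -
    have sc: "\<And>r (z::complex). r *\<^sub>R z = of_real r * z" by (simp add: scaleR_conv_of_real)
    show ?thesis
      by (rule linearI) (auto simp: Mx_def vec_eq_iff sc add_divide_distrib diff_divide_distrib algebra_simps)
  qed
  show "\<forall>v. norm (Mx a c v) = norm v"
  proof
    fix v :: "complex^'a"
    have "(\<Sum>j\<in>UNIV. (norm (Mx a c v $ j))\<^sup>2) = (\<Sum>j\<in>UNIV. (norm (v $ j))\<^sup>2)"
    proof -
      have "(\<Sum>j\<in>UNIV. (norm (Mx a c v $ j))\<^sup>2) = (norm ((v $ a + v $ c) / s2))\<^sup>2 + (norm ((v $ a - v $ c) / s2))\<^sup>2 + (\<Sum>j\<in>UNIV - {a, c}. (norm (v $ j))\<^sup>2)"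
        using ac by (subst sum_two[OF ac]) (simp add: Mx_def)
      also have "(norm ((v $ a + v $ c) / s2))\<^sup>2 + (norm ((v $ a - v $ c) / s2))\<^sup>2 = (norm (v $ a))\<^sup>2 + (norm (v $ c))\<^sup>2"
        unfolding norm_s2_sq using paral[of "v $ a" "v $ c"] by simp
      also have "(norm (v $ a))\<^sup>2 + (norm (v $ c))\<^sup>2 + (\<Sum>j\<in>UNIV - {a, c}. (norm (v $ j))\<^sup>2) = (\<Sum>j\<in>UNIV. (norm (v $ j))\<^sup>2)"
        by (subst sum_two[OF ac]) simp
      finally show ?thesis .
    qed
    then show "norm (Mx a c v) = norm v" by (simp add: norm_vec_def L2_set_def)
  qed
qed

lemma s2_sq[simp]: "s2 * s2 = 2"
  by (simp flip: of_real_mult)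

lemma s2_cnj: "(w / s2) * cnj (w / s2) = w * cnj w / 2"
proof -
  have "s2 * s2 = 2" by (simp flip: of_real_mult)
  then show ?thesis by (simp add: field_simps)
qed

lemma mo_Mx_a:
  assumes ac: "a \<noteq> c"
  shows "4 * mo a a a a (Mx a c x) = mo a a a a x + mo c c c c x + 4 * mo a a c c x + mo a c a c x + mo c a c a x
           + 2 * (mo a a a c x + mo a a c a x + mo c c a c x + mo c c c a x)"
proof -
  have "mo a a a a (Mx a c x) = ((x $ a + x $ c) / s2 * cnj ((x $ a + x $ c) / s2))\<^sup>2"
    using ac by (simp add: mo_def Mx_def power2_eq_square mult.assoc)
  also have "\<dots> = ((x $ a + x $ c) * cnj (x $ a + x $ c) / 2)\<^sup>2" by (simp only: s2_cnj)
  finally show ?thesis using ac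
    by (simp add: mo_def power2_eq_square field_simps)
qed

lemma mo_Mx_c:
  assumes ac: "a \<noteq> c"
  shows "4 * mo c c c c (Mx a c x) = mo a a a a x + mo c c c c x + 4 * mo a a c c x + mo a c a c x + mo c a c a x
           - 2 * (mo a a a c x + mo a a c a x + mo c c a c x + mo c c c a x)"
proof -
  have "mo c c c c (Mx a c x) = ((x $ a - x $ c) / s2 * cnj ((x $ a - x $ c) / s2))\<^sup>2"
    using ac by (simp add: mo_def Mx_def power2_eq_square mult.assoc)
  also have "\<dots> = ((x $ a - x $ c) * cnj (x $ a - x $ c) / 2)\<^sup>2" by (simp only: s2_cnj)
  finally show ?thesis using ac
    by (simp add: mo_def power2_eq_square field_simps)
qed

definition G :: "'r::finite \<Rightarrow> 'r \<Rightarrow> complex" where "G a c = m4 a a c c"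

lemma m4_swap1: "m4 c c a a = G a c"
  unfolding G_def m4_def mo_def by (simp add: mult_ac)

lemma m4_swap2: "m4 a c c a = G a (c::'r::finite)"
  unfolding G_def m4_def mo_def by (simp add: mult_ac)

lemma mix_rel:
  assumes ac: "a \<noteq> (c::'r::finite)"
  shows "4 * G a a = G a a + G c c + 4 * G a c" "4 * G c c = G a a + G c c + 4 * G a c"
proof -
  have z: "m4 a c a c = 0" "m4 c a c a = 0" "m4 a a a c = 0" "m4 a a c a = 0" "m4 c c a c = 0" "m4 c c c a = 0"
    using ac by (auto intro!: m4_zero)
  have "4 * m4 a a a a = (\<integral>x. 4 * mo a a a a (Mx a c x) \<partial>(uniform_sphere :: (complex^'r) measure))"
    unfolding m4_def by (simp add: integral_US_invariant[OF orth_Mx[OF ac] meas_mo])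
  also have "\<dots> = m4 a a a a + m4 c c c c + 4 * m4 a a c c + m4 a c a c + m4 c a c a
           + 2 * (m4 a a a c + m4 a a c a + m4 c c a c + m4 c c c a)"
    unfolding mo_Mx_a[OF ac] m4_def by simp
  finally show "4 * G a a = G a a + G c c + 4 * G a c" using z by (simp add: G_def)
  have "4 * m4 c c c c = (\<integral>x. 4 * mo c c c c (Mx a c x) \<partial>(uniform_sphere :: (complex^'r) measure))"
    unfolding m4_def by (simp add: integral_US_invariant[OF orth_Mx[OF ac] meas_mo])
  also have "\<dots> = m4 a a a a + m4 c c c c + 4 * m4 a a c c + m4 a c a c + m4 c a c a
           - 2 * (m4 a a a c + m4 a a c a + m4 c c a c + m4 c c c a)"
    unfolding mo_Mx_c[OF ac] m4_def by simp
  finally show "4 * G c c = G a a + G c c + 4 * G a c" using z by (simp add: G_def)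
qed

lemma m2_mix:
  assumes ac: "a \<noteq> (c::'r::finite)"
  shows "m2 a a = m2 c c"
proof -
  have pt: "2 * ((Mx a c x) $ a * cnj ((Mx a c x) $ a)) = x $ a * cnj (x $ a) + x $ c * cnj (x $ c) + x $ a * cnj (x $ c) + x $ c * cnj (x $ a)" for x :: "complex^'r"
  proof -
    have "(Mx a c x) $ a * cnj ((Mx a c x) $ a) = (x $ a + x $ c) * cnj (x $ a + x $ c) / 2"
      by (simp add: Mx_def s2_cnj)
    then show ?thesis by (simp add: algebra_simps)
  qed
  have "2 * m2 a a = (\<integral>x. 2 * ((Mx a c x) $ a * cnj ((Mx a c x) $ a)) \<partial>(uniform_sphere :: (complex^'r) measure))"
    unfolding m2_def by (simp add: integral_US_invariant[OF orth_Mx[OF ac] meas_m2])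
  also have "\<dots> = m2 a a + m2 c c + m2 a c + m2 c a"
    unfolding pt m2_def by simp
  finally show ?thesis using ac by (simp add: m2_zero)
qed




lemma sum_cnj_norm: "(\<Sum>a\<in>UNIV. x $ a * cnj (x $ a)) = complex_of_real ((norm (x::complex^'r::finite))\<^sup>2)"
proof -
  have "(norm x)\<^sup>2 = (\<Sum>a\<in>UNIV. (norm (x $ a))\<^sup>2)"
    by (simp add: norm_vec_def L2_set_def sum_nonneg)
  then show ?thesis by (simp add: complex_norm_square[symmetric] of_real_sum)
qed

lemma AE_sum1: "AE x in (uniform_sphere :: (complex^'r::finite) measure). (\<Sum>a\<in>UNIV. x $ a * cnj (x $ a)) = 1"
  using AE_US_norm by eventually_elim (simp add: sum_cnj_norm)

lemma int_US_const: "(\<integral>x. c \<partial>(uniform_sphere :: (complex^'r::finite) measure)) = (c::complex)"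
  by (simp add: measure_US_UNIV)

lemma m2_sum: "(\<Sum>a\<in>UNIV. m2 (a::'r::finite) a) = (1 :: complex)"
proof -
  have "(\<Sum>a\<in>UNIV. m2 (a::'r) a) = (\<integral>x. (\<Sum>a\<in>UNIV. x $ a * cnj (x $ a)) \<partial>(uniform_sphere :: (complex^'r::finite) measure))"
    unfolding m2_def by (simp add: integral_sum)
  also have "\<dots> = (\<integral>x. 1 \<partial>(uniform_sphere :: (complex^'r::finite) measure))"
    using AE_sum1 by (intro integral_cong_AE) (auto intro!: borel_measurable_continuous_onI continuous_intros simp: measurable_cong_sets[OF sets_US refl])
  finally show ?thesis by (simp add: measure_US_UNIV)
qed

lemma G_sum: "(\<Sum>a\<in>UNIV. \<Sum>c\<in>UNIV. G (a::'r::finite) c) = (1 :: complex)"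
proof -
  have "(\<Sum>a\<in>UNIV. \<Sum>c\<in>UNIV. G (a::'r) c) = (\<integral>x. (\<Sum>a\<in>UNIV. \<Sum>c\<in>UNIV. mo a a c c x) \<partial>(uniform_sphere :: (complex^'r::finite) measure))"
    unfolding G_def m4_def by (simp add: integral_sum integrable_sum)
  also have "\<dots> = (\<integral>x. 1 \<partial>(uniform_sphere :: (complex^'r::finite) measure))"
  proof (intro integral_cong_AE)
    show "AE x in uniform_sphere. (\<Sum>a\<in>UNIV. \<Sum>c\<in>UNIV. mo a a c c x) = 1"
      using AE_sum1
    proof eventually_elim
      case (elim x)
      have "(\<Sum>a\<in>UNIV. \<Sum>c\<in>UNIV. mo a a c c x) = (\<Sum>a\<in>UNIV. x $ a * cnj (x $ a)) * (\<Sum>c\<in>UNIV. x $ c * cnj (x $ c))"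
        by (simp add: mo_def sum_product mult.assoc)
      then show ?case using elim by simp
    qed
  qed (auto intro!: borel_measurable_continuous_onI continuous_intros simp: measurable_cong_sets[OF sets_US refl] mo_def)
  finally show ?thesis by (simp add: measure_US_UNIV)
qed

lemma m2_val: "m2 a b = (if a = b then 1 / of_nat CARD('r) else 0)" for a b :: "'r::finite"
proof (cases "a = b")
  case True
  have eq: "m2 c c = m2 b b" for c :: 'r
    by (cases "c = b") (auto intro: m2_mix)
  have "(\<Sum>c\<in>UNIV. m2 (c::'r) c) = (\<Sum>c\<in>(UNIV::'r set). m2 b b)"
    by (intro sum.cong refl eq)
  then have "of_nat CARD('r) * m2 b b = 1"
    using m2_sum[where 'r='r] by simp
  then show ?thesis using True by (simp add: field_simps)
qed (simp add: m2_zero)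

definition Kc :: "'r::finite itself \<Rightarrow> complex" where
  "Kc _ = 1 / (of_nat CARD('r) * (of_nat CARD('r) + 1))"

lemma G_val: "G a c = Kc TYPE('r) * (1 + (if a = c then 1 else 0))" for a c :: "'r::finite"
proof -
  fix b :: 'r
  have diag: "G d d = G b b" for d :: 'r
  proof (cases "d = b")
    case False
    have e1: "4 * G d d = G d d + G b b + 4 * G d b" and e2: "4 * G b b = G d d + G b b + 4 * G d b"
      using mix_rel[OF False] by auto
    have "4 * G d d = 4 * G b b" by (simp only: e1 e2)
    then show ?thesis by simp
  qed simp
  have off: "G d e = G b b / 2" if "d \<noteq> e" for d e :: 'r
  proof -
    have "4 * G d d = G d d + G e e + 4 * G d e" using mix_rel(1)[OF that] .
    then have "4 * G b b = G b b + G b b + 4 * G d e" by (simp only: diag[of d] diag[of e])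
    then show ?thesis by (simp add: field_simps)
  qed
  define D where "D = G b b"
  have Gf: "G d e = D / 2 * (1 + (if d = e then 1 else 0))" for d e :: 'r
    unfolding D_def by (cases "d = e") (simp_all add: diag[of d] diag[of e] off[of d e])
  have inner: "(\<Sum>e\<in>UNIV. (1::complex) + (if d = e then 1 else 0)) = of_nat CARD('r) + 1" for d :: 'r
    by (simp add: sum.distrib)
  have row: "(\<Sum>e\<in>UNIV. G d e) = D / 2 * (of_nat CARD('r) + 1)" for d :: 'r
  proof -
    have "(\<Sum>e\<in>UNIV. G d e) = (\<Sum>e\<in>UNIV. D / 2 * (1 + (if d = e then 1 else 0)))"
      by (rule sum.cong) (simp_all only: Gf)
    also have "\<dots> = D / 2 * (\<Sum>e\<in>UNIV. (1::complex) + (if d = e then 1 else 0))"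
      by (simp only: sum_distrib_left)
    finally show ?thesis by (simp only: inner)
  qed
  have "(\<Sum>d\<in>UNIV. \<Sum>e\<in>UNIV. G (d::'r) e) = (\<Sum>d\<in>(UNIV::'r set). D / 2 * (of_nat CARD('r) + 1))"
    by (rule sum.cong) (simp_all only: row)
  also have "\<dots> = D / 2 * (of_nat CARD('r) * (of_nat CARD('r) + 1))"
    by (simp add: algebra_simps)
  finally have "D / 2 * (of_nat CARD('r) * (of_nat CARD('r) + 1)) = 1"
    using G_sum[where 'r='r] by simp
  moreover have "(of_nat CARD('r) * (of_nat CARD('r) + 1) :: complex) \<noteq> 0"
  proof -
    have c1: "(of_nat CARD('r) + 1 :: complex) = of_nat (Suc CARD('r))" by (simp add: of_nat_Suc)
    have c2: "(of_nat (Suc CARD('r)) :: complex) \<noteq> 0" by (simp only: of_nat_eq_0_iff)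
    have c3: "(of_nat CARD('r) :: complex) \<noteq> 0" by simp
    show ?thesis unfolding c1 using c2 c3 by simp
  qed
  ultimately have "D / 2 = Kc TYPE('r)"
    unfolding Kc_def by (intro eq_divide_imp)
  then show ?thesis by (simp add: Gf)
qed

lemma m4_val: "m4 a b c d = Kc TYPE('r) * ((if a = b \<and> c = d then 1 else 0) + (if a = d \<and> c = b then 1 else 0))" for a b c d :: "'r::finite"
proof -
  consider "a = b \<and> c = d" | "\<not> (a = b \<and> c = d) \<and> a = d \<and> c = b" | "\<not> ((a = b \<and> c = d) \<or> (a = d \<and> c = b))"
    by blast
  then show ?thesis
  proof cases
    case 1
    then have "m4 a b c d = G a c" by (simp add: G_def)
    moreover have "(a = d \<and> c = b) \<longleftrightarrow> a = c" using 1 by auto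
    ultimately show ?thesis using 1 G_val[of a c] by simp
  next
    case 2
    then have "a \<noteq> c" by auto
    then have "m4 a b c d = G a c" using 2 m4_swap2[of a c] by auto
    then show ?thesis using 2 G_val[of a c] \<open>a \<noteq> c\<close> by simp
  next
    case 3
    then have "m4 a b c d = 0" by (rule m4_zero)
    moreover have "\<not> (a = b \<and> c = d)" "\<not> (a = d \<and> c = b)" using 3 by auto
    ultimately show ?thesis by (simp only: if_False) simp
  qed
qed




definition lf :: "complex^'r::finite \<Rightarrow> complex^'r \<Rightarrow> complex" where
  "lf u x = (\<Sum>i\<in>UNIV. u $ i * x $ i)"

definition ip :: "complex^'r::finite \<Rightarrow> complex^'r \<Rightarrow> complex" where
  "ip u v = (\<Sum>i\<in>UNIV. u $ i * cnj (v $ i))"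

lemma cont_lf[continuous_intros]: "continuous_on S (lf u)"
  unfolding lf_def by (intro continuous_intros)

lemma cont_lf'[continuous_intros]: "continuous_on S (\<lambda>x. lf u x)"
  unfolding lf_def by (intro continuous_intros)

lemma sum_delta1: "(\<Sum>j\<in>(UNIV::'r::finite set). f j * (if i = j then 1 else 0)) = (f i :: complex)"
proof -
  have "(\<Sum>j\<in>(UNIV::'r set). f j * (if i = j then 1 else 0)) = (\<Sum>j\<in>(UNIV::'r set). if i = j then f j else 0)"
    by (rule sum.cong) auto
  then show ?thesis by simp
qed

lemma sum_delta2: "(\<Sum>j\<in>(UNIV::'r::finite set). (if i = j then 1 else 0) * f j) = (f i :: complex)"
  using sum_delta1[of f i] by (simp add: mult.commute)

lemma Q2: "(\<integral>x. lf u x * cnj (lf v x) \<partial>(uniform_sphere :: (complex^'r::finite) measure)) = ip u v / of_nat CARD('r)"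
proof -
  have pt: "lf u x * cnj (lf v x) = (\<Sum>i\<in>UNIV. \<Sum>j\<in>UNIV. (u $ i * cnj (v $ j)) * (x $ i * cnj (x $ j)))" for x :: "complex^'r"
    by (simp add: lf_def cnj_sum sum_product mult_ac)
  have "(\<integral>x. lf u x * cnj (lf v x) \<partial>(uniform_sphere :: (complex^'r::finite) measure)) = (\<Sum>i\<in>UNIV. \<Sum>j\<in>UNIV. (u $ i * cnj (v $ j)) * m2 i j)"
    unfolding pt m2_def by (simp add: integral_sum integrable_sum)
  also have "\<dots> = (\<Sum>i\<in>UNIV. (u $ i * cnj (v $ i)) * (1 / of_nat CARD('r)))"
  proof (rule sum.cong[OF refl])
    fix i :: 'r
    have "(\<Sum>j\<in>UNIV. (u $ i * cnj (v $ j)) * m2 i j) = (\<Sum>j\<in>UNIV. ((u $ i * cnj (v $ j)) * (1 / of_nat CARD('r))) * (if i = j then 1 else 0))"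
      by (rule sum.cong) (auto simp: m2_val)
    then show "(\<Sum>j\<in>UNIV. (u $ i * cnj (v $ j)) * m2 i j) = (u $ i * cnj (v $ i)) * (1 / of_nat CARD('r))"
      by (simp only: sum_delta1)
  qed
  also have "\<dots> = ip u v / of_nat CARD('r)"
    by (simp add: ip_def sum_divide_distrib)
  finally show ?thesis .
qed

lemma sum4_delta_a:
  "(\<Sum>i\<in>UNIV. \<Sum>j\<in>UNIV. \<Sum>k\<in>UNIV. \<Sum>l\<in>(UNIV::'r set). F i j k l * (if i = j \<and> k = l then 1 else 0))
   = (\<Sum>i\<in>UNIV. \<Sum>k\<in>UNIV. (F i i k k :: complex))" for F :: "'r::finite \<Rightarrow> 'r \<Rightarrow> 'r \<Rightarrow> 'r \<Rightarrow> complex"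
proof (rule sum.cong[OF refl])
  fix i :: 'r
  have "(\<Sum>j\<in>UNIV. \<Sum>k\<in>UNIV. \<Sum>l\<in>(UNIV::'r set). F i j k l * (if i = j \<and> k = l then 1 else 0))
      = (\<Sum>j\<in>UNIV. (if i = j then 1 else 0) * (\<Sum>k\<in>UNIV. F i j k k))"
  proof (rule sum.cong[OF refl])
    fix j :: 'r
    show "(\<Sum>k\<in>UNIV. \<Sum>l\<in>(UNIV::'r set). F i j k l * (if i = j \<and> k = l then 1 else 0)) = (if i = j then 1 else 0) * (\<Sum>k\<in>UNIV. F i j k k)"
    proof (cases "i = j")
      case True
      have "(\<Sum>k\<in>UNIV. \<Sum>l\<in>(UNIV::'r set). F i j k l * (if i = j \<and> k = l then 1 else 0)) = (\<Sum>k\<in>UNIV. F i j k k)"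
      proof (rule sum.cong[OF refl])
        fix k :: 'r
        have "(\<Sum>l\<in>(UNIV::'r set). F i j k l * (if i = j \<and> k = l then 1 else 0)) = (\<Sum>l\<in>(UNIV::'r set). F i j k l * (if k = l then 1 else 0))"
          by (rule sum.cong) (simp_all add: True)
        also have "\<dots> = F i j k k" by (rule sum_delta1)
        finally show "(\<Sum>l\<in>(UNIV::'r set). F i j k l * (if i = j \<and> k = l then 1 else 0)) = F i j k k" .
      qed
      then show ?thesis using True by simp
    qed simp
  qed
  also have "\<dots> = (\<Sum>k\<in>UNIV. F i i k k)" by (rule sum_delta2)
  finally show "(\<Sum>j\<in>UNIV. \<Sum>k\<in>UNIV. \<Sum>l\<in>(UNIV::'r set). F i j k l * (if i = j \<and> k = l then 1 else 0)) = (\<Sum>k\<in>UNIV. F i i k k)" .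
qed

lemma sum4_delta_b:
  "(\<Sum>i\<in>UNIV. \<Sum>j\<in>UNIV. \<Sum>k\<in>UNIV. \<Sum>l\<in>(UNIV::'r set). F i j k l * (if i = l \<and> k = j then 1 else 0))
   = (\<Sum>i\<in>UNIV. \<Sum>k\<in>UNIV. (F i k k i :: complex))" for F :: "'r::finite \<Rightarrow> 'r \<Rightarrow> 'r \<Rightarrow> 'r \<Rightarrow> complex"
proof (rule sum.cong[OF refl])
  fix i :: 'r
  have "(\<Sum>j\<in>UNIV. \<Sum>k\<in>UNIV. \<Sum>l\<in>(UNIV::'r set). F i j k l * (if i = l \<and> k = j then 1 else 0))
      = (\<Sum>j\<in>UNIV. \<Sum>k\<in>UNIV. F i j k i * (if k = j then 1 else 0))"
  proof (intro sum.cong[OF refl])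
    fix j k :: 'r
    have "(\<Sum>l\<in>(UNIV::'r set). F i j k l * (if i = l \<and> k = j then 1 else 0)) = (\<Sum>l\<in>(UNIV::'r set). (F i j k l * (if k = j then 1 else 0)) * (if i = l then 1 else 0))"
      by (rule sum.cong) auto
    then show "(\<Sum>l\<in>(UNIV::'r set). F i j k l * (if i = l \<and> k = j then 1 else 0)) = F i j k i * (if k = j then 1 else 0)"
      by (simp only: sum_delta1)
  qed
  also have "\<dots> = (\<Sum>k\<in>UNIV. \<Sum>j\<in>UNIV. F i j k i * (if k = j then 1 else 0))"
    by (rule sum.swap)
  also have "\<dots> = (\<Sum>k\<in>UNIV. F i k k i)"
    by (simp only: sum_delta1)
  finally show "(\<Sum>j\<in>UNIV. \<Sum>k\<in>UNIV. \<Sum>l\<in>(UNIV::'r set). F i j k l * (if i = l \<and> k = j then 1 else 0)) = (\<Sum>k\<in>UNIV. F i k k i)" .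
qed

lemma Q4: "(\<integral>x. lf u x * cnj (lf v x) * lf w x * cnj (lf y x) \<partial>(uniform_sphere :: (complex^'r::finite) measure))
   = Kc TYPE('r) * (ip u v * ip w y + ip u y * ip w v)"
proof -
  define C where "C i j k l = u $ i * cnj (v $ j) * w $ k * cnj (y $ l)" for i j k l :: 'r
  have pt: "lf u x * cnj (lf v x) * lf w x * cnj (lf y x) = (\<Sum>j\<in>UNIV. \<Sum>i\<in>UNIV. \<Sum>k\<in>UNIV. \<Sum>l\<in>UNIV. C i j k l * mo i j k l x)" for x :: "complex^'r"
    by (simp add: lf_def C_def mo_def cnj_sum sum_distrib_left sum_distrib_right mult_ac)
  have "(\<integral>x. lf u x * cnj (lf v x) * lf w x * cnj (lf y x) \<partial>(uniform_sphere :: (complex^'r::finite) measure))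
      = (\<Sum>j\<in>UNIV. \<Sum>i\<in>UNIV. \<Sum>k\<in>UNIV. \<Sum>l\<in>UNIV. C i j k l * m4 i j k l)"
    unfolding pt m4_def by (simp add: integral_sum integrable_sum)
  also have "\<dots> = (\<Sum>i\<in>UNIV. \<Sum>j\<in>UNIV. \<Sum>k\<in>UNIV. \<Sum>l\<in>UNIV. C i j k l * m4 i j k l)"
    by (rule sum.swap)
  also have "\<dots> = (\<Sum>i\<in>UNIV. \<Sum>j\<in>UNIV. \<Sum>k\<in>UNIV. \<Sum>l\<in>UNIV. Kc TYPE('r) * (C i j k l * (if i = j \<and> k = l then 1 else 0)) + Kc TYPE('r) * (C i j k l * (if i = l \<and> k = j then 1 else 0)))"
    by (simp add: m4_val algebra_simps)
  also have "\<dots> = Kc TYPE('r) * ((\<Sum>i\<in>UNIV. \<Sum>j\<in>UNIV. \<Sum>k\<in>UNIV. \<Sum>l\<in>UNIV. C i j k l * (if i = j \<and> k = l then 1 else 0))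
        + (\<Sum>i\<in>UNIV. \<Sum>j\<in>UNIV. \<Sum>k\<in>UNIV. \<Sum>l\<in>UNIV. C i j k l * (if i = l \<and> k = j then 1 else 0)))"
    by (simp only: sum.distrib sum_distrib_left[symmetric] distrib_left)
  also have "\<dots> = Kc TYPE('r) * ((\<Sum>i\<in>UNIV. \<Sum>k\<in>UNIV. C i i k k) + (\<Sum>i\<in>UNIV. \<Sum>k\<in>UNIV. C i k k i))"
    by (simp only: sum4_delta_a sum4_delta_b)
  also have "\<dots> = Kc TYPE('r) * (ip u v * ip w y + ip u y * ip w v)"
    by (simp add: C_def ip_def sum_product mult_ac)
  finally show ?thesis .
qed




lemma mv_lf: "(V *v x) $ p = lf (V $ p) x"
  by (simp add: matrix_vector_mult_def lf_def)

lemma rhoS_entry: "ptrace_E (ketbra (V *v x)) $ s $ s' = (\<Sum>e\<in>UNIV. lf (V $ (s, e)) x * cnj (lf (V $ (s', e)) x))"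
  by (simp add: ptrace_E_def ketbra_def mv_lf)

lemma rhoE_entry: "ptrace_S (ketbra (V *v x)) $ e $ e' = (\<Sum>s\<in>UNIV. lf (V $ (s, e)) x * cnj (lf (V $ (s, e')) x))"
  by (simp add: ptrace_S_def ketbra_def mv_lf)

lemma VV_entry: "(V ** adj V) $ p $ q = ip (V $ p) (V $ q)"
  by (simp add: matrix_matrix_mult_def adj_def ip_def)

lemma trace_sq: "trace (A ** A) = (\<Sum>i\<in>UNIV. \<Sum>j\<in>UNIV. A $ i $ j * A $ j $ i)"
  by (simp add: trace_def matrix_matrix_mult_def)

lemma herm_trace:
  fixes A :: "complex^'n::finite^'n"
  assumes h: "\<And>i j. A $ j $ i = cnj (A $ i $ j)"
  shows "Re (trace (A ** A)) \<ge> 0"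
proof -
  have "trace (A ** A) = (\<Sum>i\<in>UNIV. \<Sum>j\<in>UNIV. A $ i $ j * cnj (A $ i $ j))"
    unfolding trace_sq by (intro sum.cong refl arg_cong2[where f="(*)"] h)
  also have "\<dots> = (\<Sum>i\<in>UNIV. \<Sum>j\<in>UNIV. complex_of_real ((norm (A $ i $ j))\<^sup>2))"
    by (simp only: complex_norm_square)
  finally have "trace (A ** A) = (\<Sum>i\<in>UNIV. \<Sum>j\<in>UNIV. complex_of_real ((norm (A $ i $ j))\<^sup>2))" .
  then have "Re (trace (A ** A)) = (\<Sum>i\<in>UNIV. \<Sum>j\<in>UNIV. (norm (A $ i $ j))\<^sup>2)"
    by simp
  also have "\<dots> \<ge> 0" by (intro sum_nonneg) auto
  finally show ?thesis .
qed

lemma ip_cnj: "ip v u = cnj (ip u v)"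
  by (simp add: ip_def cnj_sum mult.commute)

lemma sum4_reorder:
  "(\<Sum>a\<in>A. \<Sum>b\<in>B. \<Sum>c\<in>C. \<Sum>d\<in>D. f a b c d) = (\<Sum>c\<in>C. \<Sum>d\<in>D. \<Sum>a\<in>A. \<Sum>b\<in>B. f a b c d)"
proof -
  have "(\<Sum>a\<in>A. \<Sum>b\<in>B. \<Sum>c\<in>C. \<Sum>d\<in>D. f a b c d) = (\<Sum>a\<in>A. \<Sum>c\<in>C. \<Sum>b\<in>B. \<Sum>d\<in>D. f a b c d)"
    by (rule sum.cong[OF refl], rule sum.swap)
  also have "\<dots> = (\<Sum>c\<in>C. \<Sum>a\<in>A. \<Sum>b\<in>B. \<Sum>d\<in>D. f a b c d)"
    by (rule sum.swap)
  also have "\<dots> = (\<Sum>c\<in>C. \<Sum>a\<in>A. \<Sum>d\<in>D. \<Sum>b\<in>B. f a b c d)"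
    by (rule sum.cong[OF refl], rule sum.cong[OF refl], rule sum.swap)
  also have "\<dots> = (\<Sum>c\<in>C. \<Sum>d\<in>D. \<Sum>a\<in>A. \<Sum>b\<in>B. f a b c d)"
    by (rule sum.cong[OF refl], rule sum.swap)
  finally show ?thesis .
qed


theorem mainTheorem4:
  fixes V :: "complex^'r^('s::finite \<times> 'e::finite)"
  assumes isometry: "adj V ** V = mat 1"
  defines "\<rho>S \<equiv> (\<lambda>x::complex^'r. ptrace_E (ketbra (V *v x)))"
      and "\<rho>E \<equiv> (\<lambda>x::complex^'r. ptrace_S (ketbra (V *v x)))"
      and "\<E>R \<equiv> (\<chi> a b. (V ** adj V) $ a $ b / of_nat CARD('r))"
  shows "((\<integral>x. Re (trace (\<rho>S x ** \<rho>S x)) \<partial>uniform_sphere)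
           \<le> Re (trace (avg_mat uniform_sphere \<rho>S ** avg_mat uniform_sphere \<rho>S))
             + Re (trace (avg_mat uniform_sphere \<rho>E ** avg_mat uniform_sphere \<rho>E)))
    \<and> (Re (trace (avg_mat uniform_sphere \<rho>S ** avg_mat uniform_sphere \<rho>S))
             + Re (trace (avg_mat uniform_sphere \<rho>E ** avg_mat uniform_sphere \<rho>E))
         = Re (trace (ptrace_E \<E>R ** ptrace_E \<E>R)) + Re (trace (ptrace_S \<E>R ** ptrace_S \<E>R)))"
proof -
  define n where "n = (of_nat CARD('r) :: complex)"
  define I where "I p q = ip (V $ p) (V $ q)" for p q
  have n0: "n \<noteq> 0" unfolding n_def by simp
  have ER_entry: "\<E>R $ p $ q = I p q / n" for p q
    by (simp add: \<E>R_def VV_entry I_def n_def)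
  have AE: "ptrace_E \<E>R $ s $ s' = (\<Sum>e\<in>UNIV. I (s, e) (s', e)) / n" for s s'
    by (simp add: ptrace_E_def ER_entry sum_divide_distrib)
  have BE: "ptrace_S \<E>R $ e $ e' = (\<Sum>s\<in>UNIV. I (s, e) (s, e')) / n" for e e'
    by (simp add: ptrace_S_def ER_entry sum_divide_distrib)
  have intL2: "integrable (uniform_sphere :: (complex^'r) measure) (\<lambda>x. lf u x * cnj (lf v x))" for u v
    by (rule integrable_US_cont) (intro continuous_intros)
  have intL4: "integrable (uniform_sphere :: (complex^'r) measure) (\<lambda>x. lf u x * cnj (lf v x) * lf w x * cnj (lf y x))" for u v w y
    by (rule integrable_US_cont) (intro continuous_intros)
  have avgS: "avg_mat uniform_sphere \<rho>S = ptrace_E \<E>R"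
  proof -
    have "(\<integral>x. \<rho>S x $ s $ s' \<partial>uniform_sphere) = ptrace_E \<E>R $ s $ s'" for s s'
    proof -
      have "(\<integral>x. \<rho>S x $ s $ s' \<partial>uniform_sphere) = (\<Sum>e\<in>UNIV. \<integral>x. lf (V $ (s, e)) x * cnj (lf (V $ (s', e)) x) \<partial>(uniform_sphere :: (complex^'r) measure))"
        unfolding \<rho>S_def rhoS_entry by (simp add: integral_sum intL2)
      also have "\<dots> = (\<Sum>e\<in>UNIV. I (s, e) (s', e) / n)"
        by (simp add: Q2 I_def n_def)
      finally show ?thesis by (simp add: AE sum_divide_distrib)
    qed
    then show ?thesis by (simp add: avg_mat_def vec_eq_iff)
  qed
  have avgE: "avg_mat uniform_sphere \<rho>E = ptrace_S \<E>R"
  proof -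
    have "(\<integral>x. \<rho>E x $ e $ e' \<partial>uniform_sphere) = ptrace_S \<E>R $ e $ e'" for e e'
    proof -
      have "(\<integral>x. \<rho>E x $ e $ e' \<partial>uniform_sphere) = (\<Sum>s\<in>UNIV. \<integral>x. lf (V $ (s, e)) x * cnj (lf (V $ (s, e')) x) \<partial>(uniform_sphere :: (complex^'r) measure))"
        unfolding \<rho>E_def rhoE_entry by (simp add: integral_sum intL2)
      also have "\<dots> = (\<Sum>s\<in>UNIV. I (s, e) (s, e') / n)"
        by (simp add: Q2 I_def n_def)
      finally show ?thesis by (simp add: BE sum_divide_distrib)
    qed
    then show ?thesis by (simp add: avg_mat_def vec_eq_iff)
  qed
  have Icnj: "I q p = cnj (I p q)" for p q unfolding I_def by (rule ip_cnj)
  have hermA: "ptrace_E \<E>R $ j $ i = cnj (ptrace_E \<E>R $ i $ j)" for i j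
    by (simp add: AE Icnj[of "(j, _)"] cnj_sum n_def)
  have hermB: "ptrace_S \<E>R $ j $ i = cnj (ptrace_S \<E>R $ i $ j)" for i j
    by (simp add: BE Icnj[of "(_, j)"] cnj_sum n_def)
  define X where "X = (\<Sum>s\<in>UNIV. \<Sum>s'\<in>UNIV. \<Sum>e\<in>UNIV. \<Sum>e'\<in>UNIV. I (s, e) (s', e) * I (s', e') (s, e'))"
  define Y where "Y = (\<Sum>s\<in>UNIV. \<Sum>s'\<in>UNIV. \<Sum>e\<in>UNIV. \<Sum>e'\<in>UNIV. I (s, e) (s, e') * I (s', e') (s', e))"
  have tA: "trace (ptrace_E \<E>R ** ptrace_E \<E>R) = X / n\<^sup>2"
    by (simp add: trace_sq AE X_def sum_product sum_divide_distrib power2_eq_square)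
  have tB: "trace (ptrace_S \<E>R ** ptrace_S \<E>R) = Y / n\<^sup>2"
  proof -
    have "trace (ptrace_S \<E>R ** ptrace_S \<E>R) = (\<Sum>e\<in>UNIV. \<Sum>e'\<in>UNIV. \<Sum>s\<in>UNIV. \<Sum>s'\<in>UNIV. I (s, e) (s, e') * I (s', e') (s', e)) / n\<^sup>2"
      by (simp add: trace_sq BE sum_product sum_divide_distrib power2_eq_square)
    also have "(\<Sum>e\<in>UNIV. \<Sum>e'\<in>UNIV. \<Sum>s\<in>UNIV. \<Sum>s'\<in>UNIV. I (s, e) (s, e') * I (s', e') (s', e)) = Y"
      unfolding Y_def by (rule sum4_reorder)
    finally show ?thesis .
  qed
  have tr: "trace (\<rho>S x ** \<rho>S x) = (\<Sum>s\<in>UNIV. \<Sum>s'\<in>UNIV. \<Sum>e\<in>UNIV. \<Sum>e'\<in>UNIV.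
      lf (V $ (s, e)) x * cnj (lf (V $ (s', e)) x) * lf (V $ (s', e')) x * cnj (lf (V $ (s, e')) x))" for x
    by (simp add: \<rho>S_def trace_sq rhoS_entry sum_product mult.assoc)
  have int_tr_i: "integrable uniform_sphere (\<lambda>x. trace (\<rho>S x ** \<rho>S x))"
    unfolding tr by (simp add: integrable_sum intL4)
  have int_tr: "(\<integral>x. trace (\<rho>S x ** \<rho>S x) \<partial>uniform_sphere) = Kc TYPE('r) * (X + Y)"
  proof -
    have "(\<integral>x. trace (\<rho>S x ** \<rho>S x) \<partial>uniform_sphere) = (\<Sum>s\<in>UNIV. \<Sum>s'\<in>UNIV. \<Sum>e\<in>UNIV. \<Sum>e'\<in>UNIV.
      Kc TYPE('r) * (I (s, e) (s', e) * I (s', e') (s, e') + I (s, e) (s, e') * I (s', e') (s', e)))"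
      unfolding tr by (simp add: integral_sum integrable_sum intL4 Q4 I_def)
    also have "\<dots> = Kc TYPE('r) * (X + Y)"
      by (simp add: X_def Y_def sum.distrib sum_distrib_left distrib_left)
    finally show ?thesis .
  qed
  have lhs: "(\<integral>x. Re (trace (\<rho>S x ** \<rho>S x)) \<partial>uniform_sphere) = Re (Kc TYPE('r) * (X + Y))"
    using integral_Re[OF int_tr_i] int_tr by simp
  define c where "c = real CARD('r) / (real CARD('r) + 1)"
  have c01: "0 \<le> c" "c \<le> 1" unfolding c_def by auto
  have Kc_eq: "Kc TYPE('r) * (X + Y) = complex_of_real c * (X / n\<^sup>2 + Y / n\<^sup>2)"
  proof -
    have n1: "n + 1 \<noteq> 0"
    proof -
      have "n + 1 = of_nat (Suc CARD('r))" by (simp add: n_def of_nat_Suc)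
      moreover have "(of_nat (Suc CARD('r)) :: complex) \<noteq> 0" by (simp only: of_nat_eq_0_iff)
      ultimately show ?thesis by metis
    qed
    have cc: "complex_of_real c = n / (n + 1)" by (simp add: c_def n_def)
    have n1': "1 + n \<noteq> 0" using n1 by (simp add: add.commute)
    have "complex_of_real c * (X / n\<^sup>2 + Y / n\<^sup>2) = n / (n + 1) * ((X + Y) / (n * n))"
      by (simp add: cc add_divide_distrib power2_eq_square)
    also have "\<dots> = (n * (X + Y)) / (n * ((n + 1) * n))"
      by (simp add: mult_ac)
    also have "\<dots> = (X + Y) / ((n + 1) * n)"
      using n0 by (rule nonzero_mult_divide_mult_cancel_left)
    also have "\<dots> = Kc TYPE('r) * (X + Y)"
      by (simp add: Kc_def n_def mult_ac)
    finally show ?thesis by simp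
  qed
  have nonneg: "0 \<le> Re (X / n\<^sup>2) + Re (Y / n\<^sup>2)"
    using herm_trace[of "ptrace_E \<E>R", OF hermA] herm_trace[of "ptrace_S \<E>R", OF hermB] tA tB by simp
  have ineq: "Re (Kc TYPE('r) * (X + Y)) \<le> Re (X / n\<^sup>2) + Re (Y / n\<^sup>2)"
  proof -
    have "Re (Kc TYPE('r) * (X + Y)) = c * (Re (X / n\<^sup>2) + Re (Y / n\<^sup>2))"
      by (simp add: Kc_eq)
    also have "\<dots> \<le> Re (X / n\<^sup>2) + Re (Y / n\<^sup>2)"
      using c01 nonneg by (simp add: mult_left_le_one_le)
    finally show ?thesis .
  qed
  show ?thesis
    unfolding avgS avgE lhs tA[symmetric] tB[symmetric]
    using ineq tA tB by simp
qed


end
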